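(* Let $(G_n)$ be a sequence of finite $(q_n+1)$-regular graphs $G_n=(V_n,E_n)$, $q_n\in\mathbb{N}^+$, with $|V_n|\to\infty$. If the normalized spectral measures $\mu_n=\mu(G_n)$ satisfy $W_p(\mu_n,\mu_\infty)\to0$ for every $p\in[1,\infty)$, then $q_n=|V_n|^{o(1)}$, i.e. $\log q_n/\log|V_n|\to0$.
   Context: Graphs may have multi-edges and loops; adjacency matrix $A$ with $A_{ab}$ the number of directed edges from $a$ to $b$ (each undirected edge, including loops, giving two directed edges), $(q+1)$-regular meaning every vertex is the origin of $q+1$ directed edges. $\mu(G)=\frac1{|V|}\sum_k\delta_{q^{-1/2}\lambda_k(A)}$ with $\lambda_k(A)$ the eigenvalues of $A$ and $q=q_n$. Semicircle distribution $d\mu_\infty(x)=\frac1{2\pi}\sqrt{4-x^2}\mathbf 1_{|x|\le2}dx$. $W_p(\mu,\nu)=\inf_\gamma(\int|x-y|^pd\gamma)^{1/p}$ over couplings $\gamma$ of $\mu,\nu$. *)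

theory Defs
  imports "HOL-Probability.Probability" "HOL-Computational_Algebra.Polynomial_Factorial"
    "Jordan_Normal_Form.Char_Poly"
begin

text \<open>A finite (q+1)-regular multigraph with loops on the vertex set {0..<N}, given by its
  adjacency matrix: A a b = number of directed edges from a to b (an undirected edge gives
  two directed edges, in particular a loop adds 2 to the diagonal entry).\<close>
definition regular_multigraph :: "nat \<Rightarrow> (nat \<Rightarrow> nat \<Rightarrow> nat) \<Rightarrow> nat \<Rightarrow> bool" where
  "regular_multigraph N A q \<longleftrightarrow>
     (\<forall>a<N. \<forall>b<N. A a b = A b a) \<and>
     (\<forall>a<N. even (A a a)) \<and>
     (\<forall>a<N. (\<Sum>b<N. A a b) = q + 1)"

definition adj_matrix :: "nat \<Rightarrow> (nat \<Rightarrow> nat \<Rightarrow> nat) \<Rightarrow> real mat" where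
  "adj_matrix N A = mat N N (\<lambda>(i, j). real (A i j))"

definition eigenvalues_mset :: "real mat \<Rightarrow> real multiset" where
  "eigenvalues_mset M = proots (char_poly M)"

definition spectral_measure :: "nat \<Rightarrow> (nat \<Rightarrow> nat \<Rightarrow> nat) \<Rightarrow> nat \<Rightarrow> real measure" where
  "spectral_measure N A q =
     distr (measure_pmf (pmf_of_multiset
        (image_mset (\<lambda>l. l / sqrt (real q)) (eigenvalues_mset (adj_matrix N A))))) borel (\<lambda>x. x)"

definition semicircle :: "real measure" where
  "semicircle = density lborel (\<lambda>x. ennreal (indicator {-2..2} x * sqrt (4 - x\<^sup>2) / (2 * pi)))"

definition coupling :: "(real \<times> real) measure \<Rightarrow> real measure \<Rightarrow> real measure \<Rightarrow> bool" where
  "coupling \<gamma> \<mu> \<nu> \<longleftrightarrow> sets \<gamma> = sets (borel \<Otimes>\<^sub>M borel) \<and>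
     distr \<gamma> borel fst = \<mu> \<and> distr \<gamma> borel snd = \<nu>"

definition wasserstein_pow :: "real \<Rightarrow> real measure \<Rightarrow> real measure \<Rightarrow> ennreal" where
  "wasserstein_pow p \<mu> \<nu> =
     (INF \<gamma>\<in>{\<gamma>. coupling \<gamma> \<mu> \<nu>}. \<integral>\<^sup>+ z. ennreal (\<bar>fst z - snd z\<bar> powr p) \<partial>\<gamma>)"

definition wasserstein :: "real \<Rightarrow> real measure \<Rightarrow> real measure \<Rightarrow> ennreal" where
  "wasserstein p \<mu> \<nu> =
     (if wasserstein_pow p \<mu> \<nu> = \<infinity> then \<infinity>
      else ennreal (enn2real (wasserstein_pow p \<mu> \<nu>) powr (1 / p)))"

end

theory Submission
  imports Defs
begin

lemma eig:
  assumes reg: "regular_multigraph N A q" and N: "N > 0"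
  shows "real q + 1 \<in># eigenvalues_mset (adj_matrix N A)"
proof -
  have car: "adj_matrix N A \<in> carrier_mat N N" by (simp add: adj_matrix_def)
  define v :: "real vec" where "v = vec N (\<lambda>_. 1)"
  have rs: "\<And>i. i < N \<Longrightarrow> (\<Sum>j<N. real (A i j)) = real q + 1"
    using reg unfolding regular_multigraph_def
    by (metis of_nat_1 of_nat_add of_nat_sum)
  have "adj_matrix N A *\<^sub>v v = (real q + 1) \<cdot>\<^sub>v v"
    by (rule eq_vecI) (auto simp: adj_matrix_def v_def scalar_prod_def rs atLeast0LessThan)
  moreover have "v \<noteq> 0\<^sub>v N" using N by (auto simp: v_def vec_eq_iff)
  moreover have "v \<in> carrier_vec N" by (simp add: v_def)
  ultimately have "eigenvalue (adj_matrix N A) (real q + 1)"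
    unfolding eigenvalue_def eigenvector_def using car by (auto intro!: exI[of _ v])
  hence "poly (char_poly (adj_matrix N A)) (real q + 1) = 0"
    using eigenvalue_root_char_poly[OF car] by simp
  moreover have "char_poly (adj_matrix N A) \<noteq> 0"
    using degree_monic_char_poly[OF car] by auto
  ultimately show ?thesis unfolding eigenvalues_mset_def by simp
qed

lemma spec_mass:
  assumes reg: "regular_multigraph N A q" and N: "N > 0"
  shows "ennreal (1 / real N) \<le> emeasure (spectral_measure N A q) {(real q + 1) / sqrt (real q)}"
proof -
  define E where "E = eigenvalues_mset (adj_matrix N A)"
  define M where "M = image_mset (\<lambda>l. l / sqrt (real q)) E"
  define x0 where "x0 = (real q + 1) / sqrt (real q)"
  have car: "adj_matrix N A \<in> carrier_mat N N" by (simp add: adj_matrix_def)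
  have inE: "real q + 1 \<in># E" using eig[OF reg N] by (simp add: E_def)
  have inM: "x0 \<in># M" unfolding M_def x0_def using inE by auto
  hence Mne: "M \<noteq> {#}" by auto
  have szE: "size E \<le> N"
    using size_proots_le[of "char_poly (adj_matrix N A)"] degree_monic_char_poly[OF car]
    by (simp add: E_def eigenvalues_mset_def)
  have szM: "size M \<le> N" using szE by (simp add: M_def)
  have cnt: "count M x0 \<ge> 1" using inM by (simp add: Suc_le_eq)
  have pos: "size M > 0" using Mne by (simp add: nonempty_has_size)
  have "1 / real N \<le> real (count M x0) / real (size M)"
    using cnt szM pos N by (simp add: frac_le)
  also have "\<dots> = pmf (pmf_of_multiset M) x0" using Mne by simp
  finally have le: "1 / real N \<le> pmf (pmf_of_multiset M) x0" .
  have "emeasure (spectral_measure N A q) {x0} = emeasure (measure_pmf (pmf_of_multiset M)) {x0}"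
    unfolding spectral_measure_def M_def[symmetric] E_def[symmetric]
    by (subst emeasure_distr) auto
  also have "\<dots> = ennreal (pmf (pmf_of_multiset M) x0)" by (simp add: emeasure_pmf_single)
  finally show ?thesis using le x0_def by (simp add: ennreal_leI)
qed

lemma semicircle_out: "emeasure semicircle (- {-2..2}) = 0"
proof -
  have "emeasure semicircle (- {-2..2}) =
    (\<integral>\<^sup>+ x. ennreal (indicator {-2..2} x * sqrt (4 - x\<^sup>2) / (2 * pi)) * indicator (- {-2..2}) x \<partial>lborel)"
    unfolding semicircle_def by (rule emeasure_density) auto
  also have "\<dots> = (\<integral>\<^sup>+ (x::real). 0 \<partial>lborel)"
    by (rule nn_integral_cong) (auto simp: indicator_def)
  finally show ?thesis by simp
qed

lemma coupling_bound:
  assumes c: "coupling \<gamma> \<mu> semicircle" and x0: "x0 > 2" and p: "p > 0"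
  shows "emeasure \<mu> {x0} * ennreal ((x0 - 2) powr p)
     \<le> (\<integral>\<^sup>+ z. ennreal (\<bar>fst z - snd z\<bar> powr p) \<partial>\<gamma>)"
proof -
  have sg: "sets \<gamma> = sets (borel \<Otimes>\<^sub>M (borel :: real measure))" using c by (simp add: coupling_def)
  have sp: "space \<gamma> = UNIV"
    using sets_eq_imp_space_eq[OF sg] by (simp add: space_pair_measure)
  have mf: "fst \<in> measurable \<gamma> borel"
    using measurable_fst[of "borel :: real measure" "borel :: real measure"]
    by (simp add: measurable_cong_sets[OF sg refl])
  have ms: "snd \<in> measurable \<gamma> borel"
    using measurable_snd[of "borel :: real measure" "borel :: real measure"]
    by (simp add: measurable_cong_sets[OF sg refl])
  define S where "S = {x0} \<times> {-2..2::real}"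
  define T where "T = (UNIV::real set) \<times> (- {-2..2::real})"
  have Sm: "S \<in> sets \<gamma>" unfolding sg S_def by (intro pair_measureI) auto
  have Tm: "T \<in> sets \<gamma>" unfolding sg T_def by (intro pair_measureI) auto
  have "emeasure \<mu> {x0} = emeasure \<gamma> (fst -` {x0} \<inter> space \<gamma>)"
  proof -
    have "\<mu> = distr \<gamma> borel fst" using c by (simp add: coupling_def)
    thus ?thesis using mf by (simp add: emeasure_distr)
  qed
  also have "\<dots> \<le> emeasure \<gamma> (S \<union> T)"
    by (rule emeasure_mono) (use Sm Tm in \<open>auto simp: S_def T_def sp\<close>)
  also have "\<dots> \<le> emeasure \<gamma> S + emeasure \<gamma> T"
    by (rule emeasure_subadditive) (auto simp: Sm Tm)
  also have "emeasure \<gamma> T = emeasure semicircle (- {-2..2})"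
  proof -
    have e: "semicircle = distr \<gamma> borel snd" using c by (simp add: coupling_def)
    have "emeasure semicircle (- {-2..2}) = emeasure \<gamma> (snd -` (- {-2..2}) \<inter> space \<gamma>)"
      unfolding e by (rule emeasure_distr[OF ms]) auto
    also have "snd -` (- {-2..2::real}) \<inter> space \<gamma> = T" by (auto simp: T_def sp)
    finally show ?thesis by simp
  qed
  also have "\<dots> = 0" by (rule semicircle_out)
  finally have muS: "emeasure \<mu> {x0} \<le> emeasure \<gamma> S" by simp
  have "emeasure \<mu> {x0} * ennreal ((x0 - 2) powr p) \<le> emeasure \<gamma> S * ennreal ((x0 - 2) powr p)"
    using muS by (rule mult_right_mono) simp
  also have "\<dots> = (\<integral>\<^sup>+ z. ennreal ((x0 - 2) powr p) * indicator S z \<partial>\<gamma>)"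
    using nn_integral_cmult_indicator[OF Sm, of "ennreal ((x0 - 2) powr p)"] by (simp add: mult.commute)
  also have "\<dots> \<le> (\<integral>\<^sup>+ z. ennreal (\<bar>fst z - snd z\<bar> powr p) \<partial>\<gamma>)"
  proof (rule nn_integral_mono)
    fix z assume "z \<in> space \<gamma>"
    show "ennreal ((x0 - 2) powr p) * indicator S z \<le> ennreal (\<bar>fst z - snd z\<bar> powr p)"
    proof (cases "z \<in> S")
      case True
      then have "x0 - 2 \<le> \<bar>fst z - snd z\<bar>" by (auto simp: S_def)
      hence "(x0 - 2) powr p \<le> \<bar>fst z - snd z\<bar> powr p" using x0 p by (intro powr_mono2) auto
      thus ?thesis using True by (simp add: ennreal_leI)
    qed simp
  qed
  finally show ?thesis .
qed

lemma key:
  assumes reg: "regular_multigraph N A q" and N: "N > 0" and q: "q \<ge> 1" and p: "p \<ge> 1"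
    and w: "wasserstein p (spectral_measure N A q) semicircle < 1"
  shows "ln (real q) \<le> 2 * ln (real N) / p + ln 16"
proof (cases "q < 16")
  case True
  have "ln (real q) \<le> ln 16" using True q by simp
  moreover have "0 \<le> 2 * ln (real N) / p" using N p by simp
  ultimately show ?thesis by linarith
next
  case False
  define x0 where "x0 = (real q + 1) / sqrt (real q)"
  define W where "W = wasserstein_pow p (spectral_measure N A q) semicircle"
  have sq4: "sqrt (real q) \<ge> 4" using False real_sqrt_le_mono[of 16 "real q"] by simp
  have "sqrt (real q) * sqrt (real q) = real q" by simp
  hence x0ge: "x0 \<ge> sqrt (real q)" unfolding x0_def using sq4
    by (simp add: le_divide_eq)
  have x0: "x0 > 2" using x0ge sq4 by simp
  have Wfin: "W \<noteq> \<infinity>" using w unfolding wasserstein_def W_def[symmetric] by (auto split: if_splits)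
  have "ennreal (enn2real W powr (1 / p)) < 1" using w Wfin unfolding wasserstein_def W_def[symmetric] by simp
  hence pw: "enn2real W powr (1 / p) < 1" by simp
  have "enn2real W < 1"
  proof (rule ccontr)
    assume "\<not> enn2real W < 1"
    hence "1 \<le> enn2real W powr (1 / p)" using p by (intro ge_one_powr_ge_zero) auto
    thus False using pw by simp
  qed
  moreover have "ennreal (enn2real W) = W" using Wfin by (simp add: top.not_eq_extremum)
  ultimately have Wl1: "W < 1" by (metis ennreal_less_one_iff)
  have "ennreal (1 / real N) * ennreal ((x0 - 2) powr p) \<le> W"
    unfolding W_def wasserstein_pow_def
  proof (rule INF_greatest)
    fix \<gamma> assume "\<gamma> \<in> {\<gamma>. coupling \<gamma> (spectral_measure N A q) semicircle}"
    hence c: "coupling \<gamma> (spectral_measure N A q) semicircle" by simp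
    have "ennreal (1 / real N) * ennreal ((x0 - 2) powr p)
        \<le> emeasure (spectral_measure N A q) {x0} * ennreal ((x0 - 2) powr p)"
      using spec_mass[OF reg N] x0_def by (intro mult_right_mono) auto
    also have "\<dots> \<le> (\<integral>\<^sup>+ z. ennreal (\<bar>fst z - snd z\<bar> powr p) \<partial>\<gamma>)"
      using coupling_bound[OF c x0] p by simp
    finally show "ennreal (1 / real N) * ennreal ((x0 - 2) powr p)
        \<le> (\<integral>\<^sup>+ z. ennreal (\<bar>fst z - snd z\<bar> powr p) \<partial>\<gamma>)" .
  qed
  hence "ennreal (1 / real N) * ennreal ((x0 - 2) powr p) < 1" using Wl1 by (rule le_less_trans)
  hence "ennreal (1 / real N * (x0 - 2) powr p) < 1" by (subst ennreal_mult') auto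
  hence "1 / real N * (x0 - 2) powr p < 1" by (simp add: ennreal_less_one_iff)
  hence lt: "(x0 - 2) powr p < real N" using N by (simp add: field_simps)
  have pos: "x0 - 2 > 0" using x0 by simp
  have e1: "ln ((x0 - 2) powr p) = p * ln (x0 - 2)" using pos by (simp add: ln_powr)
  have ppos: "0 < (x0 - 2) powr p" using pos by simp
  have Npos: "0 < real N" using N by simp
  have "ln ((x0 - 2) powr p) < ln (real N)" using ln_less_cancel_iff[OF ppos Npos] lt by blast
  hence A1: "p * ln (x0 - 2) < ln (real N)" using e1 by linarith
  have "sqrt (real q) / 2 \<le> x0 - 2" using x0ge sq4 by simp
  moreover have "0 < sqrt (real q) / 2" using sq4 by linarith
  ultimately have "ln (sqrt (real q) / 2) \<le> ln (x0 - 2)" using ln_le_cancel_iff[of "sqrt (real q) / 2" "x0 - 2"] pos by blast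
  moreover have "ln (sqrt (real q) / 2) = ln (real q) / 2 - ln 2"
    using q by (simp add: ln_div ln_sqrt)
  ultimately have A2: "ln (real q) / 2 - ln 2 \<le> ln (x0 - 2)" by simp
  have "p * (ln (real q) / 2 - ln 2) < ln (real N)"
    using A1 A2 p by (metis (no_types) mult_left_mono less_le_trans order.trans zero_le_one le_less_trans)
  hence "ln (real q) / 2 - ln 2 < ln (real N) / p" using p by (simp add: field_simps)
  hence h: "ln (real q) < 2 * ln (real N) / p + 2 * ln 2" by (simp add: field_simps)
  have l16: "ln (16::real) = 4 * ln 2"
    using ln_realpow[of 2 4] by simp
  have l2: "ln (2::real) > 0" by simp
  show ?thesis using h l16 l2 by linarith
qed

theorem lemma4p1:
  fixes N :: "nat \<Rightarrow> nat" and A :: "nat \<Rightarrow> nat \<Rightarrow> nat \<Rightarrow> nat" and q :: "nat \<Rightarrow> nat"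
  assumes q_pos: "\<And>n. q n \<ge> 1"
    and reg: "\<And>n. regular_multigraph (N n) (A n) (q n)"
    and size: "filterlim (\<lambda>n. N n) at_top sequentially"
    and conv: "\<And>p. 1 \<le> p \<Longrightarrow>
       (\<lambda>n. wasserstein p (spectral_measure (N n) (A n) (q n)) semicircle) \<longlonglongrightarrow> 0"
  shows "(\<lambda>n. ln (real (q n)) / ln (real (N n))) \<longlonglongrightarrow> 0"
proof (rule LIMSEQ_I)
  fix r :: real assume r: "0 < r"
  obtain k :: nat where k: "4 / r < real k" using reals_Archimedean2 by blast
  have k1: "real k \<ge> 1"
  proof -
    have "0 < 4 / r" using r by simp
    hence "0 < real k" using k by linarith
    thus ?thesis by simp
  qed
  define p where "p = real k"
  have p1: "1 \<le> p" using k1 p_def by simp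
  have "eventually (\<lambda>n. wasserstein p (spectral_measure (N n) (A n) (q n)) semicircle < 1) sequentially"
    using order_tendstoD(2)[OF conv[OF p1], of 1] by simp
  moreover define B where "B = nat \<lceil>exp (2 * ln 16 / r)\<rceil> + 2"
  have "eventually (\<lambda>n. N n \<ge> B) sequentially"
    using size unfolding filterlim_at_top by blast
  ultimately have ev: "eventually (\<lambda>n. wasserstein p (spectral_measure (N n) (A n) (q n)) semicircle < 1
       \<and> N n \<ge> B) sequentially"
    by (rule eventually_conj)
  show "\<exists>no. \<forall>n\<ge>no. norm (ln (real (q n)) / ln (real (N n)) - 0) < r"
  proof -
    obtain no where no: "\<And>n. n \<ge> no \<Longrightarrow>
       wasserstein p (spectral_measure (N n) (A n) (q n)) semicircle < 1 \<and> N n \<ge> B"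
      using ev unfolding eventually_sequentially by blast
    have "norm (ln (real (q n)) / ln (real (N n)) - 0) < r" if n: "n \<ge> no" for n
    proof -
      have w: "wasserstein p (spectral_measure (N n) (A n) (q n)) semicircle < 1"
        and NB: "N n \<ge> B" using no[OF n] by auto
      have N2: "N n \<ge> 2" using NB B_def by simp
      have Npos: "N n > 0" using N2 by simp
      have kb: "ln (real (q n)) \<le> 2 * ln (real (N n)) / p + ln 16"
        using key[OF reg Npos q_pos p1 w] .
      have "exp (2 * ln 16 / r) \<le> real B" unfolding B_def by linarith
      also have "\<dots> \<le> real (N n)" using NB by simp
      finally have "exp (2 * ln 16 / r) \<le> real (N n)" .
      hence LN: "2 * ln 16 / r \<le> ln (real (N n))"
        using ln_le_cancel_iff[of "exp (2 * ln 16 / r)" "real (N n)"] Npos by simp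
      have lnpos: "0 < ln (real (N n))" using N2 by simp
      have lq0: "0 \<le> ln (real (q n))" using q_pos[of n] by simp
      have "ln (real (q n)) / ln (real (N n)) \<le> (2 * ln (real (N n)) / p + ln 16) / ln (real (N n))"
        using kb lnpos by (intro divide_right_mono) auto
      also have "\<dots> = 2 / p + ln 16 / ln (real (N n))"
        using lnpos by (simp add: field_simps)
      also have "2 / p < r / 2"
        using k r p_def k1 by (simp add: field_simps)
      also have "ln 16 / ln (real (N n)) \<le> r / 2"
        using LN lnpos r by (simp add: field_simps)
      finally have "ln (real (q n)) / ln (real (N n)) < r" by simp
      moreover have "0 \<le> ln (real (q n)) / ln (real (N n))" using lq0 lnpos by simp
      ultimately show ?thesis by simp
    qed
    thus ?thesis by blast
  qed
qed

end
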